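(* Let $\mathcal{L}$ be a homogeneous, translation-invariant linear equation $c_1x_1+\cdots+c_\ell x_\ell=0$, and let $S$ be a finite $\mathcal{L}$-free set of integers. Then for all but finitely many positive integers $\alpha$, the set $S+\alpha=\{s+\alpha:s\in S\}$ is $\mathcal{L}$-sub-equation-free.
   Context: $\mathcal{L}$ is translation-invariant if $\sum_i c_i=0$. A solution of an equation $d_1x_1+\dots+d_m x_m=0$ in $A$ is a tuple in $A^m$ satisfying it; it is trivial if there is a partition $P_1,\dots,P_k$ of $\{1,\dots,m\}$ with $x_i=x_j$ whenever $i,j$ are in the same class and $\sum_{i\in P_r}d_i=0$ for every $r$. $A$ is $\mathcal{L}$-free if it contains no non-trivial solution to $\mathcal{L}$. A proper sub-equation of $\mathcal{L}$ is obtained by deleting a non-empty set of terms (leaving at least one). A set is $\mathcal{L}$-sub-equation-free if it is $\mathcal{L}$-free and contains no non-trivial solution to any proper sub-equation of $\mathcal{L}$. *)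

theory Defs
  imports Main "HOL-Library.Sublist"
begin

text \<open>A linear equation d_1 x_1 + ... + d_m x_m = 0 with integer coefficients is
represented by its coefficient list d (0-indexed).\<close>

definition is_solution :: "int list \<Rightarrow> int set \<Rightarrow> int list \<Rightarrow> bool" where
  "is_solution d A x \<longleftrightarrow> length x = length d \<and> set x \<subseteq> A \<and>
     (\<Sum>i<length d. d ! i * x ! i) = 0"

text \<open>Trivial: there is a partition of the index set (given by a labelling p, whose
classes are the fibres) such that indices in the same class carry equal values and
the coefficients in each class sum to zero.\<close>

definition trivial_solution :: "int list \<Rightarrow> int list \<Rightarrow> bool" where
  "trivial_solution d x \<longleftrightarrow> (\<exists>p :: nat \<Rightarrow> nat.
     (\<forall>i<length d. \<forall>j<length d. p i = p j \<longrightarrow> x ! i = x ! j) \<and>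
     (\<forall>r. (\<Sum>i\<in>{i. i < length d \<and> p i = r}. d ! i) = 0))"

definition translation_invariant :: "int list \<Rightarrow> bool" where
  "translation_invariant c \<longleftrightarrow> sum_list c = 0"

definition eq_free :: "int list \<Rightarrow> int set \<Rightarrow> bool" where
  "eq_free d A \<longleftrightarrow> (\<forall>x. is_solution d A x \<longrightarrow> trivial_solution d x)"

text \<open>Proper sub-equation: delete a non-empty set of terms, leaving at least one,
i.e. keep the terms indexed by J with J non-empty and J a proper subset.\<close>

definition proper_subeq :: "int list \<Rightarrow> int list \<Rightarrow> bool" where
  "proper_subeq c d \<longleftrightarrow> (\<exists>J. J \<subseteq> {..<length c} \<and> J \<noteq> {} \<and> J \<noteq> {..<length c}
     \<and> d = nths c J)"

definition subeq_free :: "int list \<Rightarrow> int set \<Rightarrow> bool" where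
  "subeq_free c A \<longleftrightarrow> eq_free c A \<and> (\<forall>d. proper_subeq c d \<longrightarrow> eq_free d A)"

end

theory Submission imports Defs begin

fun ext :: "int list \<Rightarrow> nat set \<Rightarrow> int list \<Rightarrow> int \<Rightarrow> int list" where
  "ext [] J y s = []"
| "ext (a#cs) J y s = (if 0 \<in> J then hd y # ext cs {j. Suc j \<in> J} (tl y) s
                       else s # ext cs {j. Suc j \<in> J} y s)"

lemma ext_props:
  "length y = length (nths c J) \<Longrightarrow>
    length (ext c J y s) = length c \<and> set (ext c J y s) \<subseteq> set y \<union> {s} \<and>
    (\<forall>f::int\<times>int\<Rightarrow>int. sum_list (map f (zip c (ext c J y s))) =
      sum_list (map f (zip (nths c J) y)) + sum_list (map (\<lambda>a. f (a,s)) (nths c {i. i \<notin> J})))"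
proof (induction c arbitrary: J y)
  case Nil
  then show ?case by simp
next
  case (Cons a cs)
  show ?case
  proof (cases "0 \<in> J")
    case True
    with Cons.prems obtain h t where y: "y = h # t" and lt: "length t = length (nths cs {j. Suc j \<in> J})"
      by (cases y) (auto simp: nths_Cons)
    from Cons.IH[OF lt] True y show ?thesis by (auto simp: nths_Cons)
  next
    case False
    with Cons.prems have lt: "length y = length (nths cs {j. Suc j \<in> J})"
      by (auto simp: nths_Cons)
    from Cons.IH[OF lt] False show ?thesis by (auto simp: nths_Cons)
  qed
qed

lemma abs_nths: "sum_list (map abs (nths (c::int list) J)) \<le> sum_list (map abs c)"
proof (induction c arbitrary: J)
  case Nil then show ?case by simp
next
  case (Cons a cs) then show ?case
    by (auto simp: nths_Cons) (smt (verit) abs_ge_zero)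
qed

lemma sumA: "length x = length d \<Longrightarrow> (\<Sum>i<length d. d!i * x!i) = sum_list (map (\<lambda>p. fst p * snd p) (zip d x))"
  by (simp add: sum_list_sum_nth atLeast0LessThan)

lemma sumB: "length x = length d \<Longrightarrow> (\<Sum>i\<in>{i. i<length d \<and> x!i = v}. d!i) = sum_list (map (\<lambda>p. if snd p = v then fst p else 0) (zip d x))"
  by (simp add: sum_list_sum_nth atLeast0LessThan sum.inter_filter[symmetric] Collect_conj_eq lessThan_def Int_commute)

definition vt :: "(int\<times>int) list \<Rightarrow> bool" where
  "vt P \<longleftrightarrow> (\<forall>v. sum_list (map (\<lambda>p. if snd p = v then fst p else 0) P) = 0)"

lemma triv_iff:
  assumes len: "length x = length d"
  shows "trivial_solution d x \<longleftrightarrow> vt (zip d x)"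
proof -
  let ?n = "length d"
  have "trivial_solution d x \<longleftrightarrow> (\<forall>v. (\<Sum>i\<in>{i. i<?n \<and> x!i = v}. d!i) = 0)"
  proof
    assume "trivial_solution d x"
    then obtain p :: "nat \<Rightarrow> nat" where pc: "(\<forall>i<?n. \<forall>j<?n. p i = p j \<longrightarrow> x ! i = x ! j) \<and>
      (\<forall>r. (\<Sum>i\<in>{i. i < ?n \<and> p i = r}. d ! i) = 0)"
      unfolding trivial_solution_def by (rule exE)
    have p1: "\<forall>i<?n. \<forall>j<?n. p i = p j \<longrightarrow> x ! i = x ! j" using pc by (rule conjunct1)
    have p2: "\<forall>r. (\<Sum>i\<in>{i. i < ?n \<and> p i = r}. d ! i) = 0" using pc by (rule conjunct2)
    show "\<forall>v. (\<Sum>i\<in>{i. i<?n \<and> x!i = v}. d!i) = 0"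
    proof
      fix v
      let ?V = "{i. i<?n \<and> x!i = v}"
      have fV: "finite ?V" by simp
      have "(\<Sum>i\<in>?V. d!i) = (\<Sum>y\<in>p ` ?V. \<Sum>i\<in>{i. i \<in> ?V \<and> p i = y}. d!i)"
        using sum.group[OF fV finite_imageI[OF fV] subset_refl, where g=p and h="\<lambda>i. d!i"] by simp
      also have "\<dots> = (\<Sum>y\<in>p ` ?V. 0)"
      proof (rule sum.cong[OF refl])
        fix y assume "y \<in> p ` ?V"
        then obtain i0 where i0: "i0 < ?n" "x!i0 = v" "p i0 = y" by auto
        have "{i. i \<in> ?V \<and> p i = y} = {i. i < ?n \<and> p i = y}"
        proof (rule Collect_cong)
          fix i
          show "(i \<in> ?V \<and> p i = y) = (i < ?n \<and> p i = y)"
          proof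
            assume a: "i < ?n \<and> p i = y"
            have "p i = p i0" using a i0(3) by simp
            then have "x!i = x!i0" using p1[rule_format, of i i0] a i0(1) by blast
            then show "i \<in> ?V \<and> p i = y" using a i0(2) by simp
          qed simp
        qed
        then show "(\<Sum>i\<in>{i. i \<in> ?V \<and> p i = y}. d!i) = 0" using p2 by simp
      qed
      finally show "(\<Sum>i\<in>?V. d!i) = 0" by simp
    qed
  next
    assume h: "\<forall>v. (\<Sum>i\<in>{i. i<?n \<and> x!i = v}. d!i) = 0"
    define p where "p i = (LEAST j. x!j = x!i)" for i
    have pe: "x ! (p i) = x ! i" for i unfolding p_def by (rule LeastI) (rule refl)
    have pp: "p i = p j \<longleftrightarrow> x!i = x!j" for i j
    proof
      assume "p i = p j" then have "x!(p i) = x!(p j)" by simp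
      then show "x!i = x!j" using pe[of i] pe[of j] by simp
    next
      assume "x!i = x!j" then show "p i = p j" by (simp add: p_def)
    qed
    show "trivial_solution d x"
      unfolding trivial_solution_def
    proof (intro exI conjI allI impI)
      show "\<And>i j. i < ?n \<Longrightarrow> j < ?n \<Longrightarrow> p i = p j \<Longrightarrow> x ! i = x ! j" using pp by blast
      fix r
      show "(\<Sum>i\<in>{i. i < ?n \<and> p i = r}. d ! i) = 0"
      proof (cases "\<exists>i0<?n. p i0 = r")
        case True
        then obtain i0 where i0: "i0 < ?n" "p i0 = r" by (elim exE conjE)
        have "{i. i < ?n \<and> p i = r} = {i. i<?n \<and> x!i = x!i0}"
        proof (rule Collect_cong)
          fix i show "(i < ?n \<and> p i = r) = (i<?n \<and> x!i = x!i0)"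
            using pp[of i i0] i0(2) by simp
        qed
        then show ?thesis using h by simp
      next
        case False
        then have "{i. i < ?n \<and> p i = r} = {}" by blast
        then show ?thesis by (simp only: sum.empty)
      qed
    qed
  qed
  then show ?thesis using sumB[OF len] unfolding vt_def by simp
qed

lemma solA: "is_solution d A x \<longleftrightarrow> length x = length d \<and> set x \<subseteq> A \<and>
   sum_list (map (\<lambda>p. fst p * snd p) (zip d x)) = 0"
  unfolding is_solution_def using sumA[of x d] by auto

lemma sum_mult_s: "sum_list (map (\<lambda>a. a * s) L) = s * sum_list (L::int list)"
  by (induction L) (auto simp: algebra_simps)

lemma shift_sum: "length y = length d \<Longrightarrow>
  sum_list (map (\<lambda>p. fst p * snd p) (zip d (map (\<lambda>t. t + \<alpha>) y))) =
  sum_list (map (\<lambda>p. fst p * snd p) (zip d y)) + \<alpha> * sum_list (d::int list)"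
proof (induction d arbitrary: y)
  case Nil then show ?case by simp
next
  case (Cons a ds) then show ?case by (cases y) (auto simp: algebra_simps)
qed

lemma shift_vt_sum: "length (y::int list) = length d \<Longrightarrow>
  sum_list (map (\<lambda>p. if snd p = v then fst p else 0) (zip d (map (\<lambda>t. t + \<alpha>) y))) =
  sum_list (map (\<lambda>p. if snd p = v - \<alpha> then fst p else 0) (zip (d::int list) y))"
proof (induction d arbitrary: y)
  case Nil then show ?case by simp
next
  case (Cons a ds) then show ?case by (cases y) auto
qed

lemma shift_vt: "length (y::int list) = length d \<Longrightarrow> vt (zip d (map (\<lambda>t. t + \<alpha>) y)) \<longleftrightarrow> vt (zip (d::int list) y)"
  unfolding vt_def
proof (simp only: shift_vt_sum, intro iffI allI)
  fix v
  assume "\<forall>v. (\<Sum>p\<leftarrow>zip d y. if snd p = v - \<alpha> then fst p else 0) = 0"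
  then show "(\<Sum>p\<leftarrow>zip d y. if snd p = v then fst p else 0) = 0"
    by (erule_tac x="v + \<alpha>" in allE) simp
next
  fix v
  assume "\<forall>v. (\<Sum>p\<leftarrow>zip d y. if snd p = v then fst p else 0) = 0"
  then show "(\<Sum>p\<leftarrow>zip d y. if snd p = v - \<alpha> then fst p else 0) = 0"
    by (erule_tac x="v - \<alpha>" in allE) simp
qed

lemma bound_sum:
  assumes "set y \<subseteq> S" "\<forall>s\<in>S. \<bar>s\<bar> \<le> M" "length y = length d"
  shows "\<bar>sum_list (map (\<lambda>p. fst p * snd p) (zip d y))\<bar> \<le> sum_list (map abs d) * (M::int)"
  using assms
proof (induction d arbitrary: y)
  case Nil then show ?case by simp
next
  case (Cons a ds)
  then obtain b t where y: "y = b # t" by (cases y) auto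
  with Cons.prems have bS: "\<bar>b\<bar> \<le> M" and IH: "\<bar>sum_list (map (\<lambda>p. fst p * snd p) (zip ds t))\<bar> \<le> sum_list (map abs ds) * M"
    using Cons.IH[of t] by auto
  have "\<bar>a * b\<bar> \<le> \<bar>a\<bar> * M" unfolding abs_mult by (rule mult_left_mono[OF bS]) simp
  then show ?case using IH y by (simp add: algebra_simps)
qed

lemma free_sub:
  assumes c0: "sum_list c = 0" and fc: "eq_free c S" and d0: "sum_list d = 0"
    and J: "d = nths c J"
  shows "eq_free d S"
  unfolding eq_free_def
proof (intro allI impI)
  fix y assume sy: "is_solution d S y"
  then have ly: "length y = length d" and yS: "set y \<subseteq> S"
    and ys: "sum_list (map (\<lambda>p. fst p * snd p) (zip d y)) = 0" by (auto simp: solA)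
  show "trivial_solution d y"
  proof (cases "S = {}")
    case True
    then have "y = []" using yS by auto
    then have "d = []" using ly by simp
    then show ?thesis unfolding trivial_solution_def by simp
  next
    case False
    then obtain s where sS: "s \<in> S" by blast
    define x where "x = ext c J y s"
    have lyJ: "length y = length (nths c J)" using ly J by simp
    note E = ext_props[OF lyJ, of s, folded x_def]
    have lx: "length x = length c" using E by blast
    have xS: "set x \<subseteq> S" using E yS sS by blast
    have Ef: "\<And>f::int\<times>int\<Rightarrow>int. sum_list (map f (zip c x)) = sum_list (map f (zip d y)) + sum_list (map (\<lambda>a. f (a,s)) (nths c {i. i \<notin> J}))"
      using E unfolding J by blast
    have "sum_list (map fst (zip c x)) = sum_list (map fst (zip d y)) + sum_list (map (\<lambda>a. a) (nths c {i. i \<notin> J}))"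
      using Ef[of fst] by simp
    then have K0: "sum_list (nths c {i. i \<notin> J}) = 0" using lx ly c0 d0 by simp
    have "sum_list (map (\<lambda>p. fst p * snd p) (zip c x)) = 0"
      using Ef[of "\<lambda>p. fst p * snd p"] ys K0 sum_mult_s by simp
    then have "is_solution c S x" using lx xS by (simp add: solA)
    then have "trivial_solution c x" using fc unfolding eq_free_def by blast
    then have vx: "vt (zip c x)" using triv_iff lx by blast
    have "vt (zip d y)" unfolding vt_def
    proof
      fix v
      have "sum_list (map (\<lambda>p. if snd p = v then fst p else 0) (zip c x)) = 0" using vx vt_def by blast
      moreover have "sum_list (map (\<lambda>a. if snd (a,s) = v then fst (a,s) else 0) (nths c {i. i \<notin> J})) = 0"
        using K0 by (cases "s = v") auto
      ultimately show "sum_list (map (\<lambda>p. if snd p = v then fst p else 0) (zip d y)) = 0"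
        using Ef[of "\<lambda>p. if snd p = v then fst p else 0"] by linarith
    qed
    then show ?thesis using triv_iff ly by blast
  qed
qed

lemma good:
  assumes MS: "\<forall>s\<in>S. \<bar>s\<bar> \<le> M" and M0: "0 \<le> M"
    and Ad: "sum_list (map abs d) \<le> sum_list (map abs c)"
    and big: "sum_list (map abs c) * M < \<alpha>"
    and fr: "sum_list d = 0 \<Longrightarrow> eq_free d S"
  shows "eq_free d ((\<lambda>s. s + (\<alpha>::int)) ` S)"
  unfolding eq_free_def
proof (intro allI impI)
  fix x assume "is_solution d ((\<lambda>s. s + \<alpha>) ` S) x"
  then have lx: "length x = length d" and xS: "set x \<subseteq> (\<lambda>s. s + \<alpha>) ` S"
    and xs: "sum_list (map (\<lambda>p. fst p * snd p) (zip d x)) = 0" by (auto simp: solA)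
  define y where "y = map (\<lambda>t. t - \<alpha>) x"
  have xy: "x = map (\<lambda>t. t + \<alpha>) y" unfolding y_def by (simp add: map_idI)
  have ly: "length y = length d" using lx y_def by simp
  have yS: "set y \<subseteq> S" using xS unfolding y_def by auto
  have eq: "sum_list (map (\<lambda>p. fst p * snd p) (zip d y)) + \<alpha> * sum_list d = 0"
    using shift_sum[OF ly, of \<alpha>] xs xy by simp
  have bd: "\<bar>sum_list (map (\<lambda>p. fst p * snd p) (zip d y))\<bar> \<le> sum_list (map abs d) * M"
    using bound_sum[OF yS MS ly] .
  have bd2: "sum_list (map abs d) * M \<le> sum_list (map abs c) * M"
    using Ad M0 by (rule mult_right_mono)
  have d0: "sum_list d = 0"
  proof (rule ccontr)
    assume ne: "sum_list d \<noteq> 0"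
    have "0 \<le> sum_list (map abs c)" by (induction c) auto
    then have "0 \<le> sum_list (map abs c) * M" using M0 by simp
    then have "\<alpha> > 0" using big by linarith
    have "1 \<le> \<bar>sum_list d\<bar>" using ne by linarith
    then have "\<alpha> * 1 \<le> \<alpha> * \<bar>sum_list d\<bar>" using \<open>\<alpha> > 0\<close> by (intro mult_left_mono) auto
    then have "\<alpha> \<le> \<alpha> * \<bar>sum_list d\<bar>" by simp
    also have "\<dots> = \<bar>sum_list (map (\<lambda>p. fst p * snd p) (zip d y))\<bar>"
    proof -
      have "sum_list (map (\<lambda>p. fst p * snd p) (zip d y)) = - (\<alpha> * sum_list d)" using eq by linarith
      then show ?thesis using \<open>\<alpha> > 0\<close> by (simp add: abs_mult)
    qed
    finally show False using bd bd2 big by linarith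
  qed
  have "is_solution d S y" using ly yS eq d0 by (simp add: solA)
  then have "trivial_solution d y" using fr[OF d0] unfolding eq_free_def by blast
  then have "vt (zip d y)" using triv_iff ly by blast
  then have "vt (zip d x)" using shift_vt[OF ly] xy by simp
  then show "trivial_solution d x" using triv_iff lx by blast
qed

theorem mainTheorem11:
  fixes c :: "int list" and S :: "int set"
  assumes "translation_invariant c"
    and "finite S"
    and "eq_free c S"
  shows "finite {\<alpha>::int. \<alpha> > 0 \<and> \<not> subeq_free c ((\<lambda>s. s + \<alpha>) ` S)}"
proof -
  define M where "M = (\<Sum>s\<in>S. \<bar>s\<bar>)"
  have MS: "\<forall>s\<in>S. \<bar>s\<bar> \<le> M" unfolding M_def using assms(2)
    by (auto intro: member_le_sum)
  have M0: "0 \<le> M" unfolding M_def by (simp add: sum_nonneg)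
  have c0: "sum_list c = 0" using assms(1) translation_invariant_def by simp
  define B where "B = sum_list (map abs c) * M"
  have "{\<alpha>::int. \<alpha> > 0 \<and> \<not> subeq_free c ((\<lambda>s. s + \<alpha>) ` S)} \<subseteq> {0..B}"
  proof
    fix \<alpha> assume a: "\<alpha> \<in> {\<alpha>::int. \<alpha> > 0 \<and> \<not> subeq_free c ((\<lambda>s. s + \<alpha>) ` S)}"
    show "\<alpha> \<in> {0..B}"
    proof (rule ccontr)
      assume "\<alpha> \<notin> {0..B}"
      then have big: "B < \<alpha>" using a by auto
      have "eq_free c ((\<lambda>s. s + \<alpha>) ` S)"
        using good[OF MS M0 order_refl big[unfolded B_def]] assms(3) by blast
      moreover have "eq_free d ((\<lambda>s. s + \<alpha>) ` S)" if "proper_subeq c d" for d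
      proof -
        have "\<exists>J. d = nths c J" using that unfolding proper_subeq_def
          by (elim exE conjE) (rule exI, assumption)
        then obtain J where J: "d = nths c J" by (rule exE)
        have Ad: "sum_list (map abs d) \<le> sum_list (map abs c)" using J abs_nths by simp
        show ?thesis
          using good[OF MS M0 Ad big[unfolded B_def]] free_sub[OF c0 assms(3) _ J] by blast
      qed
      ultimately have "subeq_free c ((\<lambda>s. s + \<alpha>) ` S)" unfolding subeq_free_def by blast
      then show False using a by blast
    qed
  qed
  then show ?thesis by (rule finite_subset) simp
qed

end
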